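(* Let $[a,b]\subset[0,1]$, $c\in(0,1]$, $K=\{u\in\mathcal C([0,1]): u\ge 0,\ \min_{t\in[a,b]}u(t)\ge c\|u\|\}$ with the supremum norm $\|\cdot\|$. Assume: (H1) $f:[0,1]\times[0,\infty)\to[0,\infty)$ is such that $f(\cdot,u(\cdot))$ is measurable whenever $u\in\mathcal C([0,1])$, and for each $r>0$ there is $R>0$ with $f(t,u)\le R$ for a.a. $t\in[0,1]$ and all $u\in[0,r]$; (H2) $g$ is measurable and $g\ge 0$ a.e.; (H3) $k:[0,1]\times[0,1]\to[0,\infty)$ is continuous; (H4) there is a measurable $\Phi:[0,1]\to[0,\infty)$ with $\Phi g\in L^1(0,1)$, $\int_a^b\Phi g>0$, $k(t,s)\le\Phi(s)$ for all $t,s\in[0,1]$ and $c\Phi(s)\le k(t,s)$ for $t\in[a,b]$, $s\in[0,1]$. Let $T:K\to K$, $Tu(t)=\int_0^1k(t,s)g(s)f(s,u(s))\,ds$, and let $\mathbb T$ be its closed--convex envelope. Suppose that $\{u\}\cap\mathbb{T}u\subset\{Tu\}$ for all $u\in K\cap\mathbb{T}K$, and that there exist $\rho>0$ and $\varepsilon>0$ such that $f_{\rho,\varepsilon}>M(a,b)$, where $$f_{\rho,\varepsilon}:=\inf_{a\le t\le b,\ c(\rho-\varepsilon)\le u\le \frac{\rho}{c}+\varepsilon}\frac{f(t,u)}{\rho},\qquad \frac1{M(a,b)}:=\inf_{t\in[a,b]}\int_a^bk(t,s)g(s)\,ds.$$ Let $V_\rho=\{u\in K:\min_{a\le t\le b}u(t)<\rho\}$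 and $e(t)\equiv1$. Then $u\notin\mathbb{T}u+\lambda e$ for all $u\in\partial V_\rho$ and all $\lambda\ge0$.
   Context: The closed--convex envelope of $T:K\to K$ is $\mathbb{T}u=\bigcap_{\varepsilon>0}\overline{\mathrm{co}}\,T\big(\overline B_\varepsilon(u)\cap K\big)$, with $\overline B_\varepsilon(u)$ the closed ball in $\mathcal C([0,1])$ and $\overline{\mathrm{co}}$ the closed convex hull; $\mathbb TK=\bigcup_{u\in K}\mathbb Tu$ and $\mathbb Tu+\lambda e=\{y+\lambda e:y\in\mathbb Tu\}$. $V_\rho$ is a relatively open subset of $K$ and $\partial V_\rho$ denotes its boundary relative to $K$. *)

theory Defs
  imports "HOL-Analysis.Analysis"
begin

section \<open>The interval [0,1] as a type, so that C([0,1]) is I01 =>C real with the sup norm\<close>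

typedef I01 = "{0..1::real}"
  morphisms Rep_I01 Abs_I01
  by auto

instantiation I01 :: metric_space
begin

definition dist_I01 :: "I01 \<Rightarrow> I01 \<Rightarrow> real"
  where "dist_I01 x y = dist (Rep_I01 x) (Rep_I01 y)"

definition uniformity_I01 :: "(I01 \<times> I01) filter"
  where "uniformity_I01 = (INF e\<in>{0 <..}. principal {(x, y). dist x y < e})"

definition open_I01 :: "I01 set \<Rightarrow> bool"
  where "open_I01 S = (\<forall>x\<in>S. \<forall>\<^sub>F (x', y) in uniformity. x' = x \<longrightarrow> y \<in> S)"

instance
proof
  fix x y z :: I01
  show "dist x y = 0 \<longleftrightarrow> x = y"
    by (simp add: dist_I01_def Rep_I01_inject)
  show "dist x y \<le> dist x z + dist y z"
    unfolding dist_I01_def by (rule dist_triangle2)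
qed (simp_all add: uniformity_I01_def open_I01_def)

end

text \<open>Evaluation of an element of C([0,1]) at a real point s (meaningful for s in [0,1]).\<close>
definition ev :: "(I01 \<Rightarrow>\<^sub>C real) \<Rightarrow> real \<Rightarrow> real"
  where "ev u s = apply_bcontfun u (Abs_I01 s)"

definition coneK :: "real \<Rightarrow> real \<Rightarrow> real \<Rightarrow> (I01 \<Rightarrow>\<^sub>C real) set"
  where "coneK a b c = {u. (\<forall>x. 0 \<le> apply_bcontfun u x) \<and>
                          (INF t\<in>{a..b}. ev u t) \<ge> c * norm u}"

definition hammT :: "(real \<Rightarrow> real \<Rightarrow> real) \<Rightarrow> (real \<Rightarrow> real) \<Rightarrow> (real \<Rightarrow> real \<Rightarrow> real)
    \<Rightarrow> (I01 \<Rightarrow>\<^sub>C real) \<Rightarrow> (I01 \<Rightarrow>\<^sub>C real)"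
  where "hammT k g f u =
     Bcontfun (\<lambda>x. LINT s:{0..1}|lebesgue. k (Rep_I01 x) s * g s * f s (ev u s))"

definition cc_env :: "('a::real_normed_vector \<Rightarrow> 'a) \<Rightarrow> 'a set \<Rightarrow> 'a \<Rightarrow> 'a set"
  where "cc_env T K u = (\<Inter>\<epsilon>\<in>{0<..}. closure (convex hull (T ` (cball u \<epsilon> \<inter> K))))"

end

theory Submission
  imports Defs
begin

lemma k_meas:
  fixes k :: "real \<Rightarrow> real \<Rightarrow> real"
  assumes kc: "continuous_on ({0..1} \<times> {0..1}) (\<lambda>(t, s). k t s)" and t: "t \<in> {0..1}"
  shows "set_borel_measurable lebesgue {0..1} (\<lambda>s. k t s)"
proof -
  have "continuous_on {0..1::real} (\<lambda>s. (\<lambda>(t, s). k t s) (t, s))"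
    by (rule continuous_on_compose2[OF kc]) (use t in \<open>auto intro!: continuous_intros\<close>)
  then have "continuous_on {0..1::real} (\<lambda>s. k t s)" by simp
  then have "(\<lambda>s. indicator {0..1::real} s *\<^sub>R k t s) \<in> borel_measurable borel"
    by (intro borel_measurable_continuous_on_indicator) auto
  then show ?thesis unfolding set_borel_measurable_def
    by (intro measurable_completion) simp
qed

lemma sbm_mult:
  fixes p q :: "'a \<Rightarrow> real"
  assumes "set_borel_measurable M A p" "set_borel_measurable M A q"
  shows "set_borel_measurable M A (\<lambda>x. p x * q x)"
proof -
  have eq: "(\<lambda>x. indicator A x *\<^sub>R (p x * q x)) = (\<lambda>x. (indicator A x *\<^sub>R p x) * (indicator A x *\<^sub>R q x))"
    by (auto simp: indicator_def fun_eq_iff)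
  show ?thesis using assms unfolding set_borel_measurable_def eq by measurable
qed

lemma param_int:
  fixes k :: "real \<Rightarrow> real \<Rightarrow> real" and q w :: "real \<Rightarrow> real"
  assumes kc: "continuous_on ({0..1} \<times> {0..1}) (\<lambda>(t, s). k t s)"
    and qm: "set_borel_measurable lebesgue {0..1} q"
    and wi: "set_integrable lebesgue {0..1} w"
    and bd: "\<And>t. t \<in> {0..1} \<Longrightarrow> AE s in lebesgue. s \<in> {0..1} \<longrightarrow> \<bar>k t s * q s\<bar> \<le> w s"
  shows "\<And>t. t \<in> {0..1} \<Longrightarrow> set_integrable lebesgue {0..1} (\<lambda>s. k t s * q s)"
    and "continuous_on {0..1} (\<lambda>t. LINT s:{0..1}|lebesgue. k t s * q s)"
proof -
  have m: "set_borel_measurable lebesgue {0..1} (\<lambda>s. k t s * q s)" if "t \<in> {0..1}" for t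
    by (rule sbm_mult[OF k_meas[OF kc that] qm])
  show "set_integrable lebesgue {0..1} (\<lambda>s. k t s * q s)" if "t \<in> {0..1}" for t
    by (rule set_integrable_bound[OF wi m[OF that]]) (use bd[OF that] in \<open>eventually_elim, auto\<close>)
  show "continuous_on {0..1} (\<lambda>t. LINT s:{0..1}|lebesgue. k t s * q s)"
  proof (rule continuous_on_sequentiallyI)
    fix X :: "nat \<Rightarrow> real" and a
    assume X: "\<forall>n. X n \<in> {0..1}" and a: "a \<in> {0..1}" and lim: "X \<longlonglongrightarrow> a"
    show "(\<lambda>n. LINT s:{0..1}|lebesgue. k (X n) s * q s) \<longlonglongrightarrow> (LINT s:{0..1}|lebesgue. k a s * q s)"
      unfolding set_lebesgue_integral_def
    proof (rule integral_dominated_convergence[where w="\<lambda>s. indicator {0..1} s *\<^sub>R w s"])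
      show "(\<lambda>s. indicator {0..1} s *\<^sub>R (k a s * q s)) \<in> borel_measurable lebesgue"
        using m[OF a] unfolding set_borel_measurable_def .
      show "(\<lambda>s. indicator {0..1} s *\<^sub>R (k (X i) s * q s)) \<in> borel_measurable lebesgue" for i
        using m[of "X i"] X unfolding set_borel_measurable_def by blast
      show "integrable lebesgue (\<lambda>s. indicator {0..1} s *\<^sub>R w s)"
        using wi unfolding set_integrable_def .
      show "AE s in lebesgue. (\<lambda>i. indicator {0..1} s *\<^sub>R (k (X i) s * q s)) \<longlonglongrightarrow> indicator {0..1} s *\<^sub>R (k a s * q s)"
      proof (rule AE_I2)
        fix s :: real
        show "(\<lambda>i. indicator {0..1} s *\<^sub>R (k (X i) s * q s)) \<longlonglongrightarrow> indicator {0..1} s *\<^sub>R (k a s * q s)"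
        proof (cases "s \<in> {0..1}")
          case True
          have "((\<lambda>i. (\<lambda>(t, s). k t s) (X i, s)) \<longlonglongrightarrow> (\<lambda>(t, s). k t s) (a, s))"
            by (rule continuous_on_tendsto_compose[OF kc]) (use lim X a True in \<open>auto intro!: tendsto_intros\<close>)
          then have "(\<lambda>i. k (X i) s) \<longlonglongrightarrow> k a s" by simp
          then show ?thesis using True by (auto intro!: tendsto_intros)
        qed simp
      qed
      show "AE s in lebesgue. norm (indicator {0..1} s *\<^sub>R (k (X i) s * q s)) \<le> indicator {0..1} s *\<^sub>R w s" for i
        using bd[OF X[rule_format, of i]] by eventually_elim (auto simp: indicator_def)
    qed
  qed
qed


lemma cont_Rep: "continuous_on UNIV Rep_I01"
  unfolding continuous_on_iff dist_I01_def by auto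

lemma hamm_ev:
  fixes k :: "real \<Rightarrow> real \<Rightarrow> real" and g :: "real \<Rightarrow> real" and f :: "real \<Rightarrow> real \<Rightarrow> real"
  assumes cont: "continuous_on {0..1} (\<lambda>t. LINT s:{0..1}|lebesgue. k t s * g s * f s (ev v s))"
    and t: "t \<in> {0..1}"
  shows "ev (hammT k g f v) t = (LINT s:{0..1}|lebesgue. k t s * g s * f s (ev v s))"
proof -
  define G where "G = (\<lambda>t. LINT s:{0..1}|lebesgue. k t s * g s * f s (ev v s))"
  have c1: "continuous_on UNIV (\<lambda>x. G (Rep_I01 x))"
    by (rule continuous_on_compose2[OF cont[folded G_def] cont_Rep]) (use Rep_I01 in auto)
  have "bounded (G ` {0..1})"
    by (intro compact_imp_bounded compact_continuous_image cont[folded G_def]) auto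
  moreover have "range (\<lambda>x. G (Rep_I01 x)) \<subseteq> G ` {0..1}" using Rep_I01 by auto
  ultimately have "bounded (range (\<lambda>x. G (Rep_I01 x)))" using bounded_subset by blast
  with c1 have "(\<lambda>x. G (Rep_I01 x)) \<in> bcontfun" unfolding bcontfun_def by auto
  then have "apply_bcontfun (hammT k g f v) = (\<lambda>x. G (Rep_I01 x))"
    unfolding hammT_def G_def by (simp add: Bcontfun_inverse)
  then show ?thesis unfolding ev_def G_def using t by (simp add: Abs_I01_inverse)
qed


theorem lemma3:
  fixes a b c \<rho> \<epsilon> :: real
    and f :: "real \<Rightarrow> real \<Rightarrow> real"
    and g \<Phi> :: "real \<Rightarrow> real"
    and k :: "real \<Rightarrow> real \<Rightarrow> real"
  assumes ab: "0 \<le> a" "a \<le> b" "b \<le> 1"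
    and c: "0 < c" "c \<le> 1"
    (* (H1) *)
    and f_nonneg: "\<And>t u. t \<in> {0..1} \<Longrightarrow> 0 \<le> u \<Longrightarrow> 0 \<le> f t u"
    and f_meas: "\<And>u :: I01 \<Rightarrow>\<^sub>C real. (\<forall>x. 0 \<le> apply_bcontfun u x) \<Longrightarrow>
                    set_borel_measurable lebesgue {0..1} (\<lambda>s. f s (ev u s))"
    and f_bdd: "\<And>r. r > 0 \<Longrightarrow> \<exists>R>0. AE t in lebesgue. t \<in> {0..1} \<longrightarrow> (\<forall>u\<in>{0..r}. f t u \<le> R)"
    (* (H2) *)
    and g_meas: "set_borel_measurable lebesgue {0..1} g"
    and g_nonneg: "AE s in lebesgue. s \<in> {0..1} \<longrightarrow> 0 \<le> g s"
    (* (H3) *)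
    and k_cont: "continuous_on ({0..1} \<times> {0..1}) (\<lambda>(t, s). k t s)"
    and k_nonneg: "\<And>t s. t \<in> {0..1} \<Longrightarrow> s \<in> {0..1} \<Longrightarrow> 0 \<le> k t s"
    (* (H4) *)
    and Phi_meas: "set_borel_measurable lebesgue {0..1} \<Phi>"
    and Phi_nonneg: "\<And>s. s \<in> {0..1} \<Longrightarrow> 0 \<le> \<Phi> s"
    and Phi_g_int: "set_integrable lebesgue {0..1} (\<lambda>s. \<Phi> s * g s)"
    and Phi_g_pos: "(LINT s:{a..b}|lebesgue. \<Phi> s * g s) > 0"
    and k_le_Phi: "\<And>t s. t \<in> {0..1} \<Longrightarrow> s \<in> {0..1} \<Longrightarrow> k t s \<le> \<Phi> s"
    and Phi_le_k: "\<And>t s. t \<in> {a..b} \<Longrightarrow> s \<in> {0..1} \<Longrightarrow> c * \<Phi> s \<le> k t s"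
    (* fixed point condition on the envelope *)
    and env_cond: "\<And>u. u \<in> coneK a b c \<inter>
                       (\<Union>v\<in>coneK a b c. cc_env (hammT k g f) (coneK a b c) v) \<Longrightarrow>
                     {u} \<inter> cc_env (hammT k g f) (coneK a b c) u \<subseteq> {hammT k g f u}"
    and rho: "\<rho> > 0" and eps: "\<epsilon> > 0"
    and growth: "Inf {f t u / \<rho> | t u. t \<in> {a..b} \<and> c * (\<rho> - \<epsilon>) \<le> u \<and> u \<le> \<rho> / c + \<epsilon> \<and> 0 \<le> u}
                 > 1 / (INF t\<in>{a..b}. LINT s:{a..b}|lebesgue. k t s * g s)"
  shows "\<forall>u \<in> (top_of_set (coneK a b c)) frontier_of {u \<in> coneK a b c. (INF t\<in>{a..b}. ev u t) < \<rho>}.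
           \<forall>lam\<ge>0. u \<notin> {y + lam *\<^sub>R const_bcontfun 1 | y. y \<in> cc_env (hammT k g f) (coneK a b c) u}"
proof -
  define K where "K = coneK a b c"
  define T where "T = hammT k g f"
  define phi where "phi = (\<lambda>u. INF t\<in>{a..b}. ev u t)"
  have phi_eq: "(INF t\<in>{a..b}. ev u t) = phi u" for u by (simp add: phi_def)
  have ab_ne: "{a..b} \<noteq> {}" using ab by auto
  have sub01: "{a..b} \<subseteq> {0..1}" using ab by auto
  have ev_norm: "\<bar>ev u t\<bar> \<le> norm u" for u t
    unfolding ev_def using norm_bounded[of u] by simp
  have ev_dist: "\<bar>ev u t - ev v t\<bar> \<le> dist u v" for u v t
    unfolding ev_def using dist_bounded[of u _ v] by (simp add: dist_real_def)
  have bdd: "bdd_below ((\<lambda>t. ev u t) ` {a..b})" for u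
  proof (rule bdd_belowI2[where m="- norm u"])
    fix t show "- norm u \<le> ev u t" using ev_norm[of u t] by linarith
  qed
  have phi_le: "t \<in> {a..b} \<Longrightarrow> phi u \<le> ev u t" for u t
    unfolding phi_def by (rule cINF_lower[OF bdd])
  have phi_lip: "phi u - dist u v \<le> phi v" for u v
  proof -
    have "phi u - dist u v \<le> ev v t" if "t \<in> {a..b}" for t
      using phi_le[OF that, of u] ev_dist[of u t v] by linarith
    then have "phi u - dist u v \<le> (INF t\<in>{a..b}. ev v t)"
      by (intro cINF_greatest[OF ab_ne])
    then show ?thesis by (simp add: phi_eq)
  qed
  have K_nonneg: "u \<in> K \<Longrightarrow> 0 \<le> ev u s" for u s
    unfolding K_def coneK_def ev_def by auto
  have K_cone: "u \<in> K \<Longrightarrow> c * norm u \<le> phi u" for u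
    unfolding K_def coneK_def phi_def by auto
  define S where "S = {u \<in> K. phi u < \<rho>}"
  have front: "u \<in> K \<and> phi u = \<rho>" if uF: "u \<in> top_of_set K frontier_of S" for u
  proof -
    from uF have cl: "u \<in> top_of_set K closure_of S" and ni: "u \<notin> top_of_set K interior_of S"
      by (auto simp: frontier_of_def)
    from cl have uK: "u \<in> K" by (simp add: in_closure_of)
    have "phi u \<le> \<rho>"
    proof (rule ccontr)
      assume "\<not> phi u \<le> \<rho>"
      hence d: "phi u - \<rho> > 0" by simp
      have "openin (top_of_set K) (K \<inter> ball u (phi u - \<rho>))" by (rule openin_open_Int) simp
      moreover have "u \<in> K \<inter> ball u (phi u - \<rho>)" using uK d by simp
      ultimately obtain y where "y \<in> S" "y \<in> K \<inter> ball u (phi u - \<rho>)"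
        using cl unfolding in_closure_of by blast
      then show False using phi_lip[of u y] by (auto simp: S_def)
    qed
    moreover have "\<rho> \<le> phi u"
    proof (rule ccontr)
      assume "\<not> \<rho> \<le> phi u"
      hence d: "\<rho> - phi u > 0" by simp
      have op: "openin (top_of_set K) (K \<inter> ball u (\<rho> - phi u))" by (rule openin_open_Int) simp
      have "K \<inter> ball u (\<rho> - phi u) \<subseteq> S"
      proof
        fix y assume y: "y \<in> K \<inter> ball u (\<rho> - phi u)"
        then show "y \<in> S" using phi_lip[of y u] by (auto simp: S_def dist_commute)
      qed
      hence "u \<in> top_of_set K interior_of S" unfolding interior_of_def using op uK d by auto
      with ni show False ..
    qed
    ultimately show ?thesis using uK by simp
  qed
  have main: False if uF: "u \<in> top_of_set K frontier_of S" and lam: "0 \<le> lam"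
    and y: "y \<in> cc_env T K u" and uy: "u = y + lam *\<^sub>R const_bcontfun 1" for u y lam
  proof -
    have uK: "u \<in> K" and phiu: "phi u = \<rho>" using front[OF uF] by auto
    have "c * norm u \<le> \<rho>" using K_cone[OF uK] phiu by simp
    hence normu: "norm u \<le> \<rho> / c" using c by (simp add: le_divide_eq mult.commute)
    have rho_le: "\<rho> \<le> \<rho> / c" using c rho by (simp add: le_divide_eq mult_left_le)
    define Fset where "Fset = {f t u / \<rho> | t u. t \<in> {a..b} \<and> c * (\<rho> - \<epsilon>) \<le> u \<and> u \<le> \<rho> / c + \<epsilon> \<and> 0 \<le> u}"
    define F where "F = Inf Fset"
    have cr: "c * (\<rho> - \<epsilon>) \<le> \<rho> / c + \<epsilon>"
    proof -
      have "c * (\<rho> - \<epsilon>) \<le> c * \<rho>" using c eps by simp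
      also have "\<dots> \<le> \<rho>" using c rho by (simp add: mult_left_le_one_le)
      finally show ?thesis using rho_le eps by linarith
    qed
    have "f a (\<rho> / c + \<epsilon>) / \<rho> \<in> Fset" unfolding Fset_def
      using ab cr rho_le rho eps by force
    then have Fne: "Fset \<noteq> {}" by auto
    have Fbdd: "bdd_below Fset" unfolding Fset_def
      by (rule bdd_belowI[where m=0]) (use sub01 f_nonneg rho in force)
    have F_le: "F \<le> f t x / \<rho>" if "t \<in> {a..b}" "c * (\<rho> - \<epsilon>) \<le> x" "x \<le> \<rho> / c + \<epsilon>" "0 \<le> x" for t x
      unfolding F_def by (rule cInf_lower[OF _ Fbdd]) (use that in \<open>auto simp: Fset_def\<close>)
    have growth': "1 / (INF t\<in>{a..b}. LINT s:{a..b}|lebesgue. k t s * g s) < F"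
      using growth unfolding F_def Fset_def .
    define J where "J = (LINT s:{a..b}|lebesgue. \<Phi> s * g s)"
    define I where "I = (INF t\<in>{a..b}. LINT s:{a..b}|lebesgue. k t s * g s)"
    have ab_sets: "{a..b} \<in> sets lebesgue" by simp
    have kg_int: "set_integrable lebesgue {0..1} (\<lambda>s. k t s * g s)" if "t \<in> {0..1}" for t
    proof (rule param_int(1)[OF k_cont g_meas Phi_g_int _ that])
      fix t' :: real assume t': "t' \<in> {0..1}"
      show "AE s in lebesgue. s \<in> {0..1} \<longrightarrow> \<bar>k t' s * g s\<bar> \<le> \<Phi> s * g s"
        using g_nonneg
      proof eventually_elim
        case (elim s)
        show ?case
        proof
          assume s: "s \<in> {0..1}"
          then have "0 \<le> g s" using elim by simp
          moreover have "0 \<le> k t' s" "k t' s \<le> \<Phi> s" using k_nonneg[OF t' s] k_le_Phi[OF t' s] by auto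
          ultimately show "\<bar>k t' s * g s\<bar> \<le> \<Phi> s * g s"
            by (simp add: abs_of_nonneg mult_right_mono)
        qed
      qed
    qed
    have kg_ab: "set_integrable lebesgue {a..b} (\<lambda>s. k t s * g s)" if "t \<in> {0..1}" for t
      by (rule set_integrable_subset[OF kg_int[OF that] ab_sets sub01])
    have Pg_ab: "set_integrable lebesgue {a..b} (\<lambda>s. \<Phi> s * g s)"
      by (rule set_integrable_subset[OF Phi_g_int ab_sets sub01])
    have Jt: "c * J \<le> (LINT s:{a..b}|lebesgue. k t s * g s)" if t: "t \<in> {a..b}" for t
    proof -
      have "c * J = (LINT s:{a..b}|lebesgue. c * (\<Phi> s * g s))" unfolding J_def by simp
      also have "\<dots> \<le> (LINT s:{a..b}|lebesgue. k t s * g s)"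
      proof (rule set_integral_mono_AE)
        show "set_integrable lebesgue {a..b} (\<lambda>s. c * (\<Phi> s * g s))"
          by (rule set_integrable_mult_right) (rule Pg_ab)
        show "set_integrable lebesgue {a..b} (\<lambda>s. k t s * g s)" using kg_ab t sub01 by auto
        show "AE s\<in>{a..b} in lebesgue. c * (\<Phi> s * g s) \<le> k t s * g s"
          using g_nonneg
        proof eventually_elim
          case (elim s)
          show ?case
          proof
            assume s: "s \<in> {a..b}"
            then have "0 \<le> g s" using elim sub01 by auto
            moreover have "c * \<Phi> s \<le> k t s" using Phi_le_k[OF t] s sub01 by auto
            ultimately show "c * (\<Phi> s * g s) \<le> k t s * g s"
              by (metis mult.assoc mult_right_mono)
          qed
        qed
      qed
      finally show ?thesis .
    qed
    have I_ge: "c * J \<le> I" unfolding I_def by (rule cINF_greatest[OF ab_ne Jt])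
    have I_pos: "0 < I" using I_ge c Phi_g_pos unfolding J_def
      by (smt (verit) mult_pos_pos)
    have I_low: "I \<le> (LINT s:{a..b}|lebesgue. k t s * g s)" if "t \<in> {a..b}" for t
      unfolding I_def by (rule cINF_lower[OF bdd_belowI2[where m="c * J"] that]) (rule Jt)
    have FI: "1 < F * I" using growth' I_pos unfolding I_def[symmetric] by (simp add: divide_less_eq)
    have F_pos: "0 < F" using growth' I_pos unfolding I_def[symmetric]
      by (smt (verit) divide_pos_pos)
    define rho' where "rho' = \<rho> * F * I"
    have rho'_gt: "\<rho> < rho'" unfolding rho'_def using FI rho
      by (metis mult.assoc mult.right_neutral mult_strict_left_mono)
    have key: "rho' \<le> ev (T v) t" if v: "v \<in> cball u \<epsilon> \<inter> K" and t: "t \<in> {a..b}" for v t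
    proof -
      have vK: "v \<in> K" and duv: "dist u v \<le> \<epsilon>" using v by auto
      have vnn: "0 \<le> ev v s" for s using K_nonneg[OF vK] .
      have vnn': "\<forall>x. 0 \<le> apply_bcontfun v x" using vK unfolding K_def coneK_def by auto
      have normv: "norm v \<le> norm u + dist u v"
        using dist_triangle[of v 0 u] by (simp add: dist_commute)
      have vr: "c * (\<rho> - \<epsilon>) \<le> ev v s \<and> ev v s \<le> \<rho> / c + \<epsilon>" if s: "s \<in> {a..b}" for s
      proof
        have "\<rho> - \<epsilon> \<le> ev v s" using phi_le[OF s, of u] phiu ev_dist[of u s v] duv by linarith
        then show "c * (\<rho> - \<epsilon>) \<le> ev v s"
        proof (cases "0 \<le> \<rho> - \<epsilon>")
          case True
          then have "c * (\<rho> - \<epsilon>) \<le> \<rho> - \<epsilon>" using c by (simp add: mult_left_le_one_le)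
          then show ?thesis using \<open>\<rho> - \<epsilon> \<le> ev v s\<close> by linarith
        next
          case False
          then have "c * (\<rho> - \<epsilon>) \<le> 0" using c by (simp add: mult_nonneg_nonpos)
          then show ?thesis using vnn[of s] by linarith
        qed
        show "ev v s \<le> \<rho> / c + \<epsilon>" using ev_norm[of v s] normv normu duv by linarith
      qed
      obtain R where R: "R > 0" and Rb: "AE s in lebesgue. s \<in> {0..1} \<longrightarrow> (\<forall>x\<in>{0..norm v + 1}. f s x \<le> R)"
        using f_bdd[of "norm v + 1"] by (smt (verit) norm_ge_zero)
      define q where "q = (\<lambda>s. g s * f s (ev v s))"
      have qm: "set_borel_measurable lebesgue {0..1} q"
        unfolding q_def by (rule sbm_mult[OF g_meas f_meas[OF vnn']])
      have wi: "set_integrable lebesgue {0..1} (\<lambda>s. R * (\<Phi> s * g s))"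
        by (rule set_integrable_mult_right) (rule Phi_g_int)
      have bnd: "AE s in lebesgue. s \<in> {0..1} \<longrightarrow> \<bar>k t' s * q s\<bar> \<le> R * (\<Phi> s * g s)"
        if t': "t' \<in> {0..1}" for t'
        using g_nonneg Rb
      proof eventually_elim
        case (elim s)
        show ?case
        proof
          assume s: "s \<in> {0..1}"
          have g0: "0 \<le> g s" using elim s by simp
          have evr: "ev v s \<in> {0..norm v + 1}" using vnn[of s] ev_norm[of v s] by auto
          have fR: "f s (ev v s) \<le> R" using elim s evr by blast
          have f0: "0 \<le> f s (ev v s)" using f_nonneg[OF s vnn] .
          have k0: "0 \<le> k t' s" and kP: "k t' s \<le> \<Phi> s" using k_nonneg[OF t' s] k_le_Phi[OF t' s] by auto
          have h1: "g s * f s (ev v s) \<le> g s * R" using fR g0 by (rule mult_left_mono)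
          have h2: "k t' s * (g s * f s (ev v s)) \<le> \<Phi> s * (g s * R)"
            by (rule mult_mono[OF kP h1]) (use k0 kP g0 f0 in auto)
          have h3: "0 \<le> k t' s * (g s * f s (ev v s))" using k0 g0 f0 by simp
          have "\<bar>k t' s * q s\<bar> = k t' s * (g s * f s (ev v s))" using h3 by (simp add: q_def)
          also have "\<dots> \<le> R * (\<Phi> s * g s)" using h2 by (simp add: mult_ac)
          finally show "\<bar>k t' s * q s\<bar> \<le> R * (\<Phi> s * g s)" .
        qed
      qed
      have t01: "t \<in> {0..1}" using t sub01 by auto
      have PI2: "continuous_on {0..1} (\<lambda>t. LINT s:{0..1}|lebesgue. k t s * q s)"
        using param_int(2)[OF k_cont qm wi] bnd by blast
      have PI1: "set_integrable lebesgue {0..1} (\<lambda>s. k t s * q s)"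
        using param_int(1)[OF k_cont qm wi] bnd t01 by blast
      have cont: "continuous_on {0..1} (\<lambda>t. LINT s:{0..1}|lebesgue. k t s * g s * f s (ev v s))"
        using PI2 by (simp add: q_def mult.assoc)
      have int01: "set_integrable lebesgue {0..1} (\<lambda>s. k t s * g s * f s (ev v s))"
        using PI1 by (simp add: q_def mult.assoc)
      have intab: "set_integrable lebesgue {a..b} (\<lambda>s. k t s * g s * f s (ev v s))"
        by (rule set_integrable_subset[OF int01 ab_sets sub01])
      have Tv: "ev (T v) t = (LINT s:{0..1}|lebesgue. k t s * g s * f s (ev v s))"
        unfolding T_def by (rule hamm_ev[where k=k and g=g and f=f and v=v, OF cont t01])
      have step1: "(LINT s:{a..b}|lebesgue. k t s * g s * f s (ev v s))
                   \<le> (LINT s:{0..1}|lebesgue. k t s * g s * f s (ev v s))"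
        unfolding set_lebesgue_integral_def
      proof (rule integral_mono_AE)
        show "integrable lebesgue (\<lambda>s. indicator {a..b} s *\<^sub>R (k t s * g s * f s (ev v s)))"
          using intab unfolding set_integrable_def .
        show "integrable lebesgue (\<lambda>s. indicator {0..1} s *\<^sub>R (k t s * g s * f s (ev v s)))"
          using int01 unfolding set_integrable_def .
        show "AE s in lebesgue. indicator {a..b} s *\<^sub>R (k t s * g s * f s (ev v s))
               \<le> indicator {0..1} s *\<^sub>R (k t s * g s * f s (ev v s))"
          using g_nonneg
        proof eventually_elim
          case (elim s)
          show ?case
          proof (cases "s \<in> {0..1}")
            case True
            have "0 \<le> k t s * g s * f s (ev v s)"
              using k_nonneg[OF t01 True] elim True f_nonneg[OF True vnn] by simp
            then show ?thesis using True sub01 by (auto simp: indicator_def)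
          next
            case False
            then have "s \<notin> {a..b}" using sub01 by auto
            then show ?thesis using False by simp
          qed
        qed
      qed
      have step2: "(LINT s:{a..b}|lebesgue. (\<rho> * F) * (k t s * g s))
                   \<le> (LINT s:{a..b}|lebesgue. k t s * g s * f s (ev v s))"
      proof (rule set_integral_mono_AE)
        show "set_integrable lebesgue {a..b} (\<lambda>s. (\<rho> * F) * (k t s * g s))"
          by (rule set_integrable_mult_right) (rule kg_ab[OF t01])
        show "set_integrable lebesgue {a..b} (\<lambda>s. k t s * g s * f s (ev v s))" by (rule intab)
        show "AE s\<in>{a..b} in lebesgue. (\<rho> * F) * (k t s * g s) \<le> k t s * g s * f s (ev v s)"
          using g_nonneg
        proof eventually_elim
          case (elim s)
          show ?case
          proof
            assume s: "s \<in> {a..b}"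
            have s01: "s \<in> {0..1}" using s sub01 by auto
            have kg0: "0 \<le> k t s * g s" using k_nonneg[OF t01 s01] elim s01 by simp
            have "F \<le> f s (ev v s) / \<rho>" using F_le[OF s] vr[OF s] vnn[of s] by auto
            then have "\<rho> * F \<le> f s (ev v s)" using rho by (simp add: le_divide_eq mult.commute)
            then have "(k t s * g s) * (\<rho> * F) \<le> (k t s * g s) * f s (ev v s)"
              using kg0 by (rule mult_left_mono)
            then show "(\<rho> * F) * (k t s * g s) \<le> k t s * g s * f s (ev v s)" by (simp add: mult_ac)
          qed
        qed
      qed
      have step3: "(LINT s:{a..b}|lebesgue. (\<rho> * F) * (k t s * g s)) = (\<rho> * F) * (LINT s:{a..b}|lebesgue. k t s * g s)"
        by simp
      have step4: "(\<rho> * F) * I \<le> (\<rho> * F) * (LINT s:{a..b}|lebesgue. k t s * g s)"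
        using I_low[OF t] rho F_pos by (intro mult_left_mono) auto
      show ?thesis unfolding rho'_def Tv using step1 step2 step3 step4 by linarith
    qed
    define C where "C = {w :: I01 \<Rightarrow>\<^sub>C real. \<forall>t\<in>{a..b}. rho' \<le> ev w t}"
    have cont_eval: "continuous_on UNIV (\<lambda>w :: I01 \<Rightarrow>\<^sub>C real. apply_bcontfun w x)" for x
      unfolding continuous_on_iff using dist_bounded le_less_trans by blast
    have "C = (\<Inter>t\<in>{a..b}. {w. rho' \<le> apply_bcontfun w (Abs_I01 t)})"
      unfolding C_def ev_def by auto
    moreover have "closed {w. rho' \<le> apply_bcontfun w (Abs_I01 t)}" for t
      by (rule closed_Collect_le[OF continuous_on_const cont_eval])
    ultimately have closedC: "closed C" by (simp add: closed_INT)
    have convexC: "convex C"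
      unfolding C_def
    proof (rule convexI)
      fix w1 w2 :: "I01 \<Rightarrow>\<^sub>C real" and p q :: real
      assume w1: "w1 \<in> {w. \<forall>t\<in>{a..b}. rho' \<le> ev w t}" and w2: "w2 \<in> {w. \<forall>t\<in>{a..b}. rho' \<le> ev w t}"
        and p: "0 \<le> p" and q: "0 \<le> q" and pq: "p + q = 1"
      show "p *\<^sub>R w1 + q *\<^sub>R w2 \<in> {w. \<forall>t\<in>{a..b}. rho' \<le> ev w t}"
      proof (simp, intro ballI)
        fix t assume t: "t \<in> {a..b}"
        have "p * rho' \<le> p * ev w1 t" using w1 t p by (intro mult_left_mono) auto
        moreover have "q * rho' \<le> q * ev w2 t" using w2 t q by (intro mult_left_mono) auto
        moreover have "rho' = p * rho' + q * rho'" using pq by (simp flip: distrib_right)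
        ultimately have "rho' \<le> p * ev w1 t + q * ev w2 t" by linarith
        then show "rho' \<le> ev (p *\<^sub>R w1 + q *\<^sub>R w2) t" by (simp add: ev_def)
      qed
    qed
    have "T ` (cball u \<epsilon> \<inter> K) \<subseteq> C" unfolding C_def using key by auto
    then have "closure (convex hull (T ` (cball u \<epsilon> \<inter> K))) \<subseteq> C"
      by (intro closure_minimal hull_minimal closedC convexC)
    moreover have "y \<in> closure (convex hull (T ` (cball u \<epsilon> \<inter> K)))"
      using y eps unfolding cc_env_def by auto
    ultimately have yC: "y \<in> C" by blast
    have "rho' \<le> ev u t" if t: "t \<in> {a..b}" for t
    proof -
      have "ev u t = ev y t + lam" unfolding uy ev_def by simp
      moreover have "rho' \<le> ev y t" using yC t unfolding C_def by blast
      ultimately show ?thesis using lam by linarith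
    qed
    then have "rho' \<le> (INF t\<in>{a..b}. ev u t)" by (intro cINF_greatest[OF ab_ne])
    then show False using phiu rho'_gt by (simp add: phi_eq)
  qed
  show ?thesis
    unfolding K_def[symmetric] T_def[symmetric] phi_eq S_def[symmetric]
    using main by blast
qed

end
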